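(* Let $\rho$ be a normal ruling of a front of a Legendrian link $\Lambda$, let $o$ be an orientation of $\Lambda$ and $o^\rho$ an orientation of $\Lambda^\rho$. Then the quantity \[ e_2(\rho)\equiv s_-(\rho)+f_+(\rho,o,o^\rho)-f_-(\rho,o,o^\rho) \pmod 2 \] does not depend on the choices of $o$ and $o^\rho$.
   Context: Normal ruling: fix a front diagram of $\Lambda$ whose crossings and cusps have distinct $x$-coordinates. A normal ruling $\rho$ is a set of crossings (switches) such that, letting $\Lambda^\rho$ be the front obtained by resolving each switch into two horizontal non-crossing segments: (i) each component of $\Lambda^\rho$ is planar isotopic to the standard front of the maximal-$tb$ Legendrian unknot; (ii) exactly two components of $\Lambda^\rho$ are incident to each switch; (iii) in a small vertical strip around each switch, the two incident ruling disks are either nested or disjoint. $s_-(\rho)$ is the number of switches that are negative crossings (w.r.t. $o$). A crossing of $\Lambda^\rho$ is flipped if its sign computed from $o$ differs from its sign computed from $o^\rho$; $f_+(\rho,o,o^\rho)$ (resp. $f_-$) is the number of flipped crossings of $\Lambda^\rho$ that are positive (resp. negative) with respect to $o^\rho$. *)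

theory Defs
  imports Main "HOL-Number_Theory.Cong"
begin

text \<open>
Combinatorial model of a front diagram whose crossings and cusps have distinct
x-coordinates.  Reading the front from left to right, it is a word of events.
Between consecutive events the front consists of finitely many x-monotone
strands, indexed by their height order 0,1,2,... (0 = top).
  LCusp k : a left cusp appears; its two new strands occupy heights k, k+1;
  RCusp k : the strands at heights k, k+1 end in a right cusp;
  Cross k : the strands at heights k and k+1 cross.
Slice t (0 \<le> t \<le> length ev) is the vertical strip between event t-1 and event t;
a segment is a pair (t,i) = strand at height i in slice t.  Events are numbered
0..length ev - 1, event t lying between slices t and t+1.
\<close>

datatype event = LCusp nat | RCusp nat | Cross nat

fun wstep :: "nat \<Rightarrow> event \<Rightarrow> nat" where
  "wstep n (LCusp k) = n + 2"
| "wstep n (RCusp k) = n - 2"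
| "wstep n (Cross k) = n"

definition width :: "event list \<Rightarrow> nat \<Rightarrow> nat" where
  "width ev t = foldl wstep 0 (take t ev)"

definition valid_front :: "event list \<Rightarrow> bool" where
  "valid_front ev \<longleftrightarrow>
     (\<forall>t < length ev. (case ev ! t of
         LCusp k \<Rightarrow> k \<le> width ev t
       | RCusp k \<Rightarrow> k + 1 < width ev t
       | Cross k \<Rightarrow> k + 1 < width ev t))
     \<and> width ev (length ev) = 0"

definition segs :: "event list \<Rightarrow> (nat \<times> nat) set" where
  "segs ev = {(t, i). t \<le> length ev \<and> i < width ev t}"

definition swp :: "nat \<Rightarrow> nat \<Rightarrow> nat" where
  "swp k i = (if i = k then k + 1 else if i = k + 1 then k else i)"

text \<open>Continuation of the strand at height i in slice t across event t, in the front
obtained by resolving the crossings in S (S = {} gives the original front \<Lambda>,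
S = \<rho> gives \<Lambda>^\<rho>: a resolved switch becomes two horizontal non-crossing segments).\<close>

definition pass :: "event list \<Rightarrow> nat set \<Rightarrow> nat \<Rightarrow> nat \<Rightarrow> nat option" where
  "pass ev S t i = (case ev ! t of
      Cross k \<Rightarrow> Some (if t \<in> S then i else swp k i)
    | LCusp k \<Rightarrow> Some (if i < k then i else i + 2)
    | RCusp k \<Rightarrow> (if i = k \<or> i = k + 1 then None
                   else Some (if i < k then i else i - 2)))"

definition cont_edges :: "event list \<Rightarrow> nat set \<Rightarrow> ((nat \<times> nat) \<times> (nat \<times> nat)) set" where
  "cont_edges ev S = {((t, i), (t + 1, j)) | t i j.
      t < length ev \<and> i < width ev t \<and> pass ev S t i = Some j}"

definition cusp_edges :: "event list \<Rightarrow> ((nat \<times> nat) \<times> (nat \<times> nat)) set" where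
  "cusp_edges ev =
     {((t + 1, k), (t + 1, k + 1)) | t k. t < length ev \<and> ev ! t = LCusp k}
   \<union> {((t, k), (t, k + 1)) | t k. t < length ev \<and> ev ! t = RCusp k}"

text \<open>An orientation of the (resolved) front: a choice of x-direction
(True = rightward) on each segment, preserved along strands and reversed at cusps.\<close>
definition orientation :: "event list \<Rightarrow> nat set \<Rightarrow> (nat \<times> nat \<Rightarrow> bool) \<Rightarrow> bool" where
  "orientation ev S d \<longleftrightarrow>
     (\<forall>(a, b) \<in> cont_edges ev S. d a = d b) \<and> (\<forall>(a, b) \<in> cusp_edges ev. d a \<noteq> d b)"

definition conn :: "event list \<Rightarrow> nat set \<Rightarrow> ((nat \<times> nat) \<times> (nat \<times> nat)) set" where
  "conn ev S = ((cont_edges ev S \<union> cusp_edges ev) \<union> (cont_edges ev S \<union> cusp_edges ev)\<inverse>)\<^sup>*"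

definition comp :: "event list \<Rightarrow> nat set \<Rightarrow> nat \<times> nat \<Rightarrow> (nat \<times> nat) set" where
  "comp ev S x = {y \<in> segs ev. (x, y) \<in> conn ev S}"

definition components :: "event list \<Rightarrow> nat set \<Rightarrow> (nat \<times> nat) set set" where
  "components ev S = comp ev S ` segs ev"

definition is_cross :: "event \<Rightarrow> bool" where
  "is_cross e = (case e of Cross k \<Rightarrow> True | _ \<Rightarrow> False)"

text \<open>A component is planar isotopic to the standard max-tb unknot front (an "eye") iff it
has exactly one left cusp, exactly one right cusp and no self-crossings (crossings of the
resolved front with both strands in the component).\<close>
definition is_eye :: "event list \<Rightarrow> nat set \<Rightarrow> (nat \<times> nat) set \<Rightarrow> bool" where
  "is_eye ev S C \<longleftrightarrow>
     card {t. t < length ev \<and> (\<exists>k. ev ! t = LCusp k \<and> (t + 1, k) \<in> C)} = 1 \<and>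
     card {t. t < length ev \<and> (\<exists>k. ev ! t = RCusp k \<and> (t, k) \<in> C)} = 1 \<and>
     (\<forall>t k. t < length ev \<and> t \<notin> S \<and> ev ! t = Cross k \<longrightarrow>
          \<not> ((t, k) \<in> C \<and> (t, k + 1) \<in> C))"

definition heights :: "(nat \<times> nat) set \<Rightarrow> nat \<Rightarrow> nat set" where
  "heights C t = {i. (t, i) \<in> C}"

definition interleaved :: "nat set \<Rightarrow> nat set \<Rightarrow> bool" where
  "interleaved A B \<longleftrightarrow> (\<exists>a1 \<in> A. \<exists>a2 \<in> A. \<exists>b1 \<in> B. \<exists>b2 \<in> B. a1 < b1 \<and> b1 < a2 \<and> a2 < b2)"

definition normal_ruling :: "event list \<Rightarrow> nat set \<Rightarrow> bool" where
  "normal_ruling ev \<rho> \<longleftrightarrow>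
     \<rho> \<subseteq> {t. t < length ev \<and> is_cross (ev ! t)} \<and>
     (\<forall>C \<in> components ev \<rho>. is_eye ev \<rho> C) \<and>
     (\<forall>t \<in> \<rho>. \<forall>k. ev ! t = Cross k \<longrightarrow>
        comp ev \<rho> (t, k) \<noteq> comp ev \<rho> (t, k + 1) \<and>
        \<not> interleaved (heights (comp ev \<rho> (t, k)) t) (heights (comp ev \<rho> (t, k + 1)) t) \<and>
        \<not> interleaved (heights (comp ev \<rho> (t, k + 1)) t) (heights (comp ev \<rho> (t, k)) t))"

text \<open>Sign of the crossing at event t w.r.t. an orientation d: positive iff both strands
point in the same x-direction.\<close>
definition cross_pos :: "event list \<Rightarrow> (nat \<times> nat \<Rightarrow> bool) \<Rightarrow> nat \<Rightarrow> bool" where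
  "cross_pos ev d t = (case ev ! t of Cross k \<Rightarrow> d (t, k) = d (t, k + 1) | _ \<Rightarrow> True)"

definition s_minus :: "event list \<Rightarrow> nat set \<Rightarrow> (nat \<times> nat \<Rightarrow> bool) \<Rightarrow> nat" where
  "s_minus ev \<rho> o1 = card {t \<in> \<rho>. \<not> cross_pos ev o1 t}"

definition flipped :: "event list \<Rightarrow> nat set \<Rightarrow> (nat \<times> nat \<Rightarrow> bool) \<Rightarrow> (nat \<times> nat \<Rightarrow> bool) \<Rightarrow> nat set" where
  "flipped ev \<rho> o1 orr = {t. t < length ev \<and> is_cross (ev ! t) \<and> t \<notin> \<rho> \<and>
                          cross_pos ev o1 t \<noteq> cross_pos ev orr t}"

definition f_plus :: "event list \<Rightarrow> nat set \<Rightarrow> (nat \<times> nat \<Rightarrow> bool) \<Rightarrow> (nat \<times> nat \<Rightarrow> bool) \<Rightarrow> nat" where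
  "f_plus ev \<rho> o1 orr = card {t \<in> flipped ev \<rho> o1 orr. cross_pos ev orr t}"

definition f_minus :: "event list \<Rightarrow> nat set \<Rightarrow> (nat \<times> nat \<Rightarrow> bool) \<Rightarrow> (nat \<times> nat \<Rightarrow> bool) \<Rightarrow> nat" where
  "f_minus ev \<rho> o1 orr = card {t \<in> flipped ev \<rho> o1 orr. \<not> cross_pos ev orr t}"

end

theory Submission imports Defs begin

fun binv :: "bool list \<Rightarrow> nat" where
  "binv [] = 0"
| "binv (x # xs) = (if x then length (filter Not xs) else 0) + binv xs"

lemma binv_append: "binv (xs @ ys) = binv xs + binv ys + length (filter id xs) * length (filter Not ys)"
  by (induction xs) (auto simp: algebra_simps)

lemma binv_swap: "even (binv (xs @ a # b # ys) + binv (xs @ b # a # ys) + (if a \<noteq> b then 1 else 0))"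
  by (cases a; cases b) (auto simp: binv_append algebra_simps)

lemma binv_pair: "even (binv (xs @ v # v # ys) + binv (xs @ ys))"
proof -
  have "binv (xs @ v # v # ys) = binv (xs @ ys)
     + 2 * (if v then length (filter Not ys) else length (filter id xs))"
    by (cases v) (simp_all add: binv_append algebra_simps)
  then have "binv (xs @ v # v # ys) + binv (xs @ ys) = 2 * (binv (xs @ ys)
     + (if v then length (filter Not ys) else length (filter id xs)))" by simp
  then show ?thesis by simp
qed

lemma split3: "k + 1 < length L \<Longrightarrow> L = take k L @ L ! k # L ! (k+1) # drop (k+2) L"
  by (metis Cons_nth_drop_Suc Suc_eq_plus1 Suc_lessD add_2_eq_Suc' append_take_drop_id add.commute)

lemma width_Suc: "t < length ev \<Longrightarrow> width ev (Suc t) = wstep (width ev t) (ev ! t)"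
  by (simp add: width_def take_Suc_conv_app_nth)


lemma parity_lemma:
  fixes g :: "nat \<times> nat \<Rightarrow> bool"
  assumes vf: "valid_front ev"
    and ce: "\<And>a b. (a,b) \<in> cont_edges ev S \<Longrightarrow> g a = g b"
    and cu: "\<And>a b. (a,b) \<in> cusp_edges ev \<Longrightarrow> g a = g b"
  shows "even (card {t. t < length ev \<and> t \<notin> S \<and> (\<exists>k. ev ! t = Cross k \<and> g (t,k) \<noteq> g (t,k+1))})"
proof -
  define X where "X t = (t \<notin> S \<and> (\<exists>k. ev ! t = Cross k \<and> g (t,k) \<noteq> g (t,k+1)))" for t
  define L where "L t = map (\<lambda>i. g (t,i)) [0..<width ev t]" for t
  have Lnth: "L s ! i = g (s, i)" if "i < width ev s" for s i using that by (simp add: L_def)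
  have Llen: "length (L s) = width ev s" for s by (simp add: L_def)
  have step: "even (binv (L (Suc t)) + binv (L t) + (if X t then 1 else 0))" if tn: "t < length ev" for t
  proof -
    let ?w = "width ev t"
    have ws: "width ev (Suc t) = wstep ?w (ev ! t)" using tn by (rule width_Suc)
    have vt: "case ev ! t of LCusp k \<Rightarrow> k \<le> ?w | RCusp k \<Rightarrow> k+1 < ?w | Cross k \<Rightarrow> k+1 < ?w"
      using vf tn by (auto simp: valid_front_def)
    have cont: "g (Suc t, j) = g (t, i)" if "i < ?w" "pass ev S t i = Some j" for i j
      using ce[of "(t,i)" "(Suc t,j)"] that tn unfolding cont_edges_def by auto
    have len: "length (L t) = ?w" by (simp add: L_def)
    show ?thesis
    proof (cases "ev ! t")
      case (Cross k)
      have kw: "k+1 < ?w" using vt Cross by simp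
      show ?thesis
      proof (cases "t \<in> S")
        case True
        have "L (Suc t) = L t"
          unfolding L_def using ws Cross
          apply (intro nth_equalityI) apply simp
          subgoal for j using cont[of j j] True Cross by (simp add: pass_def)
          done
        then show ?thesis using True by (simp add: X_def)
      next
        case False
        have gs: "g (Suc t, j) = g (t, swp k j)" if "j < ?w" for j
          using cont[of "swp k j" j] that kw False Cross by (auto simp: pass_def swp_def)
        have e1: "L (Suc t) = (L t)[k := L t ! (k+1), k+1 := L t ! k]"
          unfolding L_def using ws Cross kw
          apply (intro nth_equalityI) apply simp
          subgoal for j using gs[of j] by (auto simp: nth_list_update swp_def)
          done
        have e2: "L t = take k (L t) @ L t ! k # L t ! (k+1) # drop (k+2) (L t)"
          using split3[of k "L t"] kw len by simp
        have e3: "X t = (L t ! k \<noteq> L t ! (k+1))" using False Cross kw by (simp add: X_def L_def)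
        obtain xs a b ys where o: "L t = xs @ a # b # ys" "length xs = k"
          using e2 kw len by (metis length_take min.absorb4 Suc_eq_plus1 Suc_lessD)
        have Ls: "L (Suc t) = xs @ b # a # ys" using e1 o by (simp add: list_update_append nth_append)
        have Xt: "X t = (a \<noteq> b)" using e3 o by (simp add: nth_append)
        have h: "binv (L (Suc t)) + binv (L t) + (if X t then 1 else 0)
           = binv (xs @ a # b # ys) + binv (xs @ b # a # ys) + (if a \<noteq> b then 1 else 0)"
          unfolding Ls Xt o(1) by simp
        show ?thesis unfolding h by (rule binv_swap)
      qed
    next
      case (LCusp k)
      have kw: "k \<le> ?w" using vt LCusp by simp
      define v where "v = g (Suc t, k)"
      have v2: "g (Suc t, Suc k) = v" unfolding v_def
        using cu[of "(Suc t, k)" "(Suc t, Suc k)"] tn LCusp by (auto simp: cusp_edges_def)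
      have gl: "g (Suc t, if i < k then i else i + 2) = g (t, i)" if "i < ?w" for i
        using cont[of i] that LCusp by (simp add: pass_def)
      have "L (Suc t) = take k (L t) @ v # v # drop k (L t)"
      proof (rule nth_equalityI)
        show "length (L (Suc t)) = length (take k (L t) @ v # v # drop k (L t))"
          using ws LCusp len kw by (simp add: L_def)
        fix j assume "j < length (L (Suc t))"
        then have j: "j < ?w + 2" using ws LCusp by (simp add: L_def)
        consider "j < k" | "j = k" | "j = Suc k" | "Suc (Suc k) \<le> j" by linarith
        have lj: "L (Suc t) ! j = g (Suc t, j)" using Lnth[of j "Suc t"] j ws LCusp by simp
        consider "j < k" | "j = k" | "j = Suc k" | "Suc (Suc k) \<le> j" by linarith
        then show "L (Suc t) ! j = (take k (L t) @ v # v # drop k (L t)) ! j"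
        proof cases
          case 1 then show ?thesis using j gl[of j] kw len lj Lnth[of j t] by (simp add: nth_append)
        next
          case 2 then show ?thesis using j kw len lj by (simp add: nth_append v_def)
        next
          case 3 then show ?thesis using j kw len v2 lj by (simp add: nth_append)
        next
          case 4
          define m where "m = j - 2"
          have m: "j = m + 2" "k \<le> m" using 4 unfolding m_def by simp_all
          then show ?thesis using j gl[of m] kw len lj Lnth[of m t]
            by (simp add: nth_append)
        qed
      qed
      moreover have "\<not> X t" using LCusp by (simp add: X_def)
      ultimately show ?thesis using binv_pair[of "take k (L t)" v "drop k (L t)"] by simp
    next
      case (RCusp k)
      have kw: "k + 1 < ?w" using vt RCusp by simp
      have gl: "g (Suc t, if i < k then i else i - 2) = g (t, i)" if "i < ?w" "i \<noteq> k" "i \<noteq> k + 1" for i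
        using cont[of i] that RCusp by (simp add: pass_def)
      have ab: "g (t, k) = g (t, Suc k)"
        using cu[of "(t, k)" "(t, Suc k)"] tn RCusp by (auto simp: cusp_edges_def)
      have e2: "L t = take k (L t) @ L t ! k # L t ! (k+1) # drop (k+2) (L t)"
        using split3[of k "L t"] kw len by simp
      have ab2: "L t ! (k+1) = L t ! k" using ab kw by (simp add: L_def)
      have "L (Suc t) = take k (L t) @ drop (k+2) (L t)"
      proof (rule nth_equalityI)
        show "length (L (Suc t)) = length (take k (L t) @ drop (k+2) (L t))"
          using ws RCusp len kw by (simp add: L_def)
        fix j assume "j < length (L (Suc t))"
        then have j: "j + 2 < ?w" using ws RCusp by (simp add: L_def)
        have lj: "L (Suc t) ! j = g (Suc t, j)" using Lnth[of j "Suc t"] j ws RCusp by simp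
        show "L (Suc t) ! j = (take k (L t) @ drop (k+2) (L t)) ! j"
        proof (cases "j < k")
          case True then show ?thesis using j gl[of j] kw len lj Lnth[of j t] by (simp add: nth_append)
        next
          case False then show ?thesis using j gl[of "j+2"] kw len lj Lnth[of "j+2" t] by (simp add: nth_append)
        qed
      qed
      moreover have "\<not> X t" using RCusp by (simp add: X_def)
      ultimately show ?thesis using binv_pair[of "take k (L t)" "L t ! k" "drop (k+2) (L t)"] e2 ab2 by simp
    qed
  qed
  have main: "even (binv (L t) + card {s. s < t \<and> X s})" if "t \<le> length ev" for t
    using that
  proof (induction t)
    case 0
    then show ?case by (simp add: L_def width_def)
  next
    case (Suc t)
    have c: "{s. s < Suc t \<and> X s} = {s. s < t \<and> X s} \<union> (if X t then {t} else {})" using less_Suc_eq by auto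
    have cs: "card {s. s < Suc t \<and> X s} = card {s. s < t \<and> X s} + (if X t then 1 else 0)"
      unfolding c by auto
    have e1: "2 dvd (binv (L (Suc t)) + binv (L t) + (if X t then 1 else 0))"
      using Suc.prems by (intro step) simp
    have e2: "2 dvd (binv (L t) + card {s. s < t \<and> X s})" using Suc by simp
    have eq: "(binv (L (Suc t)) + card {s. s < Suc t \<and> X s}) + 2 * binv (L t)
       = (binv (L (Suc t)) + binv (L t) + (if X t then 1 else 0)) + (binv (L t) + card {s. s < t \<and> X s})"
      unfolding cs by simp
    have "2 dvd ((binv (L (Suc t)) + card {s. s < Suc t \<and> X s}) + 2 * binv (L t))"
      unfolding eq using e1 e2 by (rule dvd_add)
    then show ?case by (simp only: dvd_add_left_iff dvd_triv_left)
  qed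
  have "L (length ev) = []" using vf by (simp add: L_def valid_front_def)
  then have "even (card {s. s < length ev \<and> X s})" using main[of "length ev"] by simp
  then show ?thesis by (simp add: X_def)
qed


lemma cardsum: fixes n :: nat shows "int (card {t. t < n \<and> P t}) = (\<Sum>t<n. (of_bool (P t) :: int))"
proof (induction n)
  case 0 then show ?case by simp
next
  case (Suc n)
  have c: "{t. t < Suc n \<and> P t} = {t. t < n \<and> P t} \<union> (if P n then {n} else {})"
    using less_Suc_eq by auto
  have "card {t. t < Suc n \<and> P t} = card {t. t < n \<and> P t} + (if P n then 1 else 0)"
    unfolding c by auto
  then show ?case using Suc by simp
qed

lemma bool_par:
  fixes R p q u v p2 q2 u2 v2 :: bool
  shows "(2::int) dvd (of_bool (R \<and> \<not> (p = q)) + of_bool (\<not> R \<and> (p = q) \<noteq> (u = v) \<and> (u = v))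
     - of_bool (\<not> R \<and> (p = q) \<noteq> (u = v) \<and> \<not> (u = v))
     - (of_bool (R \<and> \<not> (p2 = q2)) + of_bool (\<not> R \<and> (p2 = q2) \<noteq> (u2 = v2) \<and> (u2 = v2))
     - of_bool (\<not> R \<and> (p2 = q2) \<noteq> (u2 = v2) \<and> \<not> (u2 = v2)))
     - of_bool ((p \<noteq> p2) \<noteq> (q \<noteq> q2)) - of_bool (\<not> R \<and> ((u \<noteq> u2) \<noteq> (v \<noteq> v2))))"
  by (cases R; cases p; cases q; cases u; cases v; cases p2; cases q2; cases u2; cases v2) simp_all

theorem lemma3p2:
  fixes ev :: "event list" and \<rho> :: "nat set"
    and o1 o2 or1 or2 :: "nat \<times> nat \<Rightarrow> bool"
  assumes "valid_front ev"
    and "normal_ruling ev \<rho>"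
    and "orientation ev {} o1" and "orientation ev {} o2"
    and "orientation ev \<rho> or1" and "orientation ev \<rho> or2"
  shows "[int (s_minus ev \<rho> o1) + int (f_plus ev \<rho> o1 or1) - int (f_minus ev \<rho> o1 or1)
        = int (s_minus ev \<rho> o2) + int (f_plus ev \<rho> o2 or2) - int (f_minus ev \<rho> o2 or2)] (mod 2)"
proof -
  let ?n = "length ev"
  define g where "g x = (o1 x \<noteq> o2 x)" for x
  define h where "h x = (or1 x \<noteq> or2 x)" for x
  have rs: "\<rho> \<subseteq> {t. t < ?n \<and> is_cross (ev ! t)}" using assms(2) by (simp add: normal_ruling_def)
  have PG: "even (card {t. t < ?n \<and> t \<notin> {} \<and> (\<exists>k. ev ! t = Cross k \<and> g (t,k) \<noteq> g (t,k+1))})"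
  proof (rule parity_lemma[OF assms(1)])
    fix a b assume "(a,b) \<in> cont_edges ev {}"
    then show "g a = g b" using assms(3,4) unfolding orientation_def g_def by auto
  next
    fix a b assume "(a,b) \<in> cusp_edges ev"
    then show "g a = g b" using assms(3,4) unfolding orientation_def g_def by auto
  qed
  have PH: "even (card {t. t < ?n \<and> t \<notin> \<rho> \<and> (\<exists>k. ev ! t = Cross k \<and> h (t,k) \<noteq> h (t,k+1))})"
  proof (rule parity_lemma[OF assms(1)])
    fix a b assume "(a,b) \<in> cont_edges ev \<rho>"
    then show "h a = h b" using assms(5,6) unfolding orientation_def h_def by auto
  next
    fix a b assume "(a,b) \<in> cusp_edges ev"
    then show "h a = h b" using assms(5,6) unfolding orientation_def h_def by auto
  qed
  define F where "F o' or' t = (of_bool (t \<in> \<rho> \<and> \<not> cross_pos ev o' t)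
     + of_bool (is_cross (ev ! t) \<and> t \<notin> \<rho> \<and> cross_pos ev o' t \<noteq> cross_pos ev or' t \<and> cross_pos ev or' t)
     - of_bool (is_cross (ev ! t) \<and> t \<notin> \<rho> \<and> cross_pos ev o' t \<noteq> cross_pos ev or' t \<and> \<not> cross_pos ev or' t) :: int)"
    for o' or' :: "nat \<times> nat \<Rightarrow> bool" and t
  have Q: "int (s_minus ev \<rho> o') + int (f_plus ev \<rho> o' or') - int (f_minus ev \<rho> o' or')
     = (\<Sum>t<?n. (F o' or' t :: int))" for o' or'
  proof -
    have s: "{t \<in> \<rho>. \<not> cross_pos ev o' t} = {t. t < ?n \<and> (t \<in> \<rho> \<and> \<not> cross_pos ev o' t)}" using rs by auto
    have p: "{t \<in> flipped ev \<rho> o' or'. cross_pos ev or' t} = {t. t < ?n \<and> (is_cross (ev ! t) \<and> t \<notin> \<rho> \<and> cross_pos ev o' t \<noteq> cross_pos ev or' t \<and> cross_pos ev or' t)}"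
      by (auto simp: flipped_def)
    have m: "{t \<in> flipped ev \<rho> o' or'. \<not> cross_pos ev or' t} = {t. t < ?n \<and> (is_cross (ev ! t) \<and> t \<notin> \<rho> \<and> cross_pos ev o' t \<noteq> cross_pos ev or' t \<and> \<not> cross_pos ev or' t)}"
      by (auto simp: flipped_def)
    show ?thesis unfolding s_minus_def f_plus_def f_minus_def s p m cardsum F_def
      by (simp add: sum.distrib sum_subtractf)
  qed
  define G' where "G' t = (of_bool (\<exists>k. ev ! t = Cross k \<and> g (t,k) \<noteq> g (t,k+1)) :: int)" for t
  define H' where "H' t = (of_bool (t \<notin> \<rho> \<and> (\<exists>k. ev ! t = Cross k \<and> h (t,k) \<noteq> h (t,k+1))) :: int)" for t
  have sG: "2 dvd (\<Sum>t<?n. G' t)"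
  proof -
    have "(\<Sum>t<?n. G' t) = int (card {t. t < ?n \<and> t \<notin> {} \<and> (\<exists>k. ev ! t = Cross k \<and> g (t,k) \<noteq> g (t,k+1))})"
      unfolding cardsum G'_def by simp
    then show ?thesis using PG by simp
  qed
  have sH: "2 dvd (\<Sum>t<?n. H' t)"
  proof -
    have "(\<Sum>t<?n. H' t) = int (card {t. t < ?n \<and> t \<notin> \<rho> \<and> (\<exists>k. ev ! t = Cross k \<and> h (t,k) \<noteq> h (t,k+1))})"
      unfolding cardsum H'_def by simp
    then show ?thesis using PH by simp
  qed
  have pw: "2 dvd (F o1 or1 t - F o2 or2 t - G' t - H' t)" for t
  proof (cases "ev ! t")
    case (Cross k)
    show ?thesis unfolding F_def G'_def H'_def g_def h_def cross_pos_def Cross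
      using bool_par[of "t \<in> \<rho>" "o1 (t,k)" "o1 (t,k+1)" "or1 (t,k)" "or1 (t,k+1)"
          "o2 (t,k)" "o2 (t,k+1)" "or2 (t,k)" "or2 (t,k+1)"]
      by (simp add: is_cross_def)
  next
    case (LCusp k)
    then have "t \<notin> \<rho>" using rs by (auto simp: is_cross_def)
    then show ?thesis unfolding F_def G'_def H'_def using LCusp by (simp add: is_cross_def)
  next
    case (RCusp k)
    then have "t \<notin> \<rho>" using rs by (auto simp: is_cross_def)
    then show ?thesis unfolding F_def G'_def H'_def using RCusp by (simp add: is_cross_def)
  qed
  have "(\<Sum>t<?n. F o1 or1 t) - (\<Sum>t<?n. F o2 or2 t)
     = (\<Sum>t<?n. F o1 or1 t - F o2 or2 t - G' t - H' t) + (\<Sum>t<?n. G' t) + (\<Sum>t<?n. H' t)"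
    by (simp add: sum_subtractf sum.distrib)
  moreover have "2 dvd (\<Sum>t<?n. F o1 or1 t - F o2 or2 t - G' t - H' t)"
    using pw by (intro dvd_sum) simp
  ultimately have "2 dvd ((\<Sum>t<?n. F o1 or1 t) - (\<Sum>t<?n. F o2 or2 t))"
    using sG sH by simp
  then show ?thesis unfolding Q cong_iff_dvd_diff .
qed

end
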